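(* In the private bug bounty model with a single artificial bug described in the context, let $c_a(\overline v)$ be the unique fixed point of $\hat c\mapsto\overline v\,\Phi(\hat c;1)$. Then $c_a(\overline v)$ increases in $\overline v$ and $C(\overline v)=[0,c_a(\overline v)]$, where $$C(\overline v)=\Big\{\hat c:\ \hat c=\Psi(\hat c;\boldsymbol v,v_a,q_a),\ \sum_l v^l+v_a\le\overline v,\ v^l\ge0,\ v_a\ge0,\ q_a\in[0,1]\Big\}.$$
   Context: Private bug bounty model. There are $L$ potential organic bugs; bug $l$ exists with probability $\mu^l\in(0,1]$ and has complexity $q^l\in(0,1]$. There are $n$ agents with private search costs drawn i.i.d. from a distribution $F$ with support $[\underline c,\overline c]$ ($-\infty\le\underline c<\overline c\le\infty$, $\overline c>0$), continuous with full support, finite density $f$ and $F/f$ non-decreasing; $F(\hat c)$ denotes the distribution function. The designer has budget $\overline v>0$, sets prizes $v^l\ge0$ for organic bugs, and inserts one artificial bug (existing with certainty) with prize $v_a\ge0$ and complexity $q_a\in[0,1]$. A searching agent finds each existing bug of complexity $q$ with probability $q$, independently across agents and bugs; the prize of a found bug goes to one of its finders chosen uniformly at random. $\Phi(\hat c;q)$ is the probability that a searching agent wins the prize of an existing bug of complexity $q$ when each of the other $n-1$ agents searches iff his/her cost is at most $\hat c$. $\Psi(\hat c;\boldsymbol v,v_a,q_a)=\sum_l v^l\mu^l\Phi(\hat c;q^l)+v_a\Phi(\hat c;q_a)$. *)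

theory Defs
  imports "HOL-Analysis.Analysis" "HOL-Library.Extended_Real"
begin

definition cost_dist :: "ereal \<Rightarrow> ereal \<Rightarrow> (real \<Rightarrow> real) \<Rightarrow> (real \<Rightarrow> real) \<Rightarrow> bool" where
  "cost_dist cl ch F f \<longleftrightarrow>
     cl < ch \<and> 0 < ch \<and>
     continuous_on UNIV F \<and> mono F \<and>
     (F \<longlongrightarrow> 0) at_bot \<and> (F \<longlongrightarrow> 1) at_top \<and>
     (\<forall>x. ereal x \<le> cl \<longrightarrow> F x = 0) \<and>
     (\<forall>x. ch \<le> ereal x \<longrightarrow> F x = 1) \<and>
     strict_mono_on {x. cl < ereal x \<and> ereal x < ch} F \<and>
     (\<forall>x. cl < ereal x \<and> ereal x < ch \<longrightarrow> (F has_real_derivative f x) (at x)) \<and>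
     mono_on {x. cl < ereal x \<and> ereal x < ch} (\<lambda>x. F x / f x)"

text \<open>Probability that a searching agent wins the prize of an existing bug of complexity q,
  when each of the other n-1 agents searches iff cost \<le> c: the agent finds it (prob. q),
  k of the others find it (Binomial(n-1, q F c)), and the prize is split uniformly among k+1 finders.\<close>
definition Phi :: "(real \<Rightarrow> real) \<Rightarrow> nat \<Rightarrow> real \<Rightarrow> real \<Rightarrow> real" where
  "Phi F n c q = q * (\<Sum>k<n. real ((n - 1) choose k) * (q * F c) ^ k
                        * (1 - q * F c) ^ (n - 1 - k) / real (k + 1))"

definition Psi :: "(real \<Rightarrow> real) \<Rightarrow> nat \<Rightarrow> nat \<Rightarrow> (nat \<Rightarrow> real) \<Rightarrow> (nat \<Rightarrow> real)
                   \<Rightarrow> real \<Rightarrow> (nat \<Rightarrow> real) \<Rightarrow> real \<Rightarrow> real \<Rightarrow> real" where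
  "Psi F n L mu q c v va qa = (\<Sum>l<L. v l * mu l * Phi F n c (q l)) + va * Phi F n c qa"

definition Cset :: "(real \<Rightarrow> real) \<Rightarrow> nat \<Rightarrow> nat \<Rightarrow> (nat \<Rightarrow> real) \<Rightarrow> (nat \<Rightarrow> real) \<Rightarrow> real \<Rightarrow> real set" where
  "Cset F n L mu q vbar = {c. \<exists>v va qa. c = Psi F n L mu q c v va qa
      \<and> (\<Sum>l<L. v l) + va \<le> vbar \<and> (\<forall>l<L. 0 \<le> v l) \<and> 0 \<le> va \<and> 0 \<le> qa \<and> qa \<le> 1}"

definition c_a :: "(real \<Rightarrow> real) \<Rightarrow> nat \<Rightarrow> real \<Rightarrow> real" where
  "c_a F n vbar = (THE c. c = vbar * Phi F n c 1)"

end

theory Submission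
  imports Defs
begin

lemma geo: "(p::real) * (\<Sum>j<n. (1-p)^j) = 1 - (1-p)^n"
  by (induction n) (auto simp: algebra_simps)

lemma S_eq: fixes p :: real and m :: nat
  shows "(\<Sum>k<Suc m. real (m choose k) * p^k * (1-p)^(m-k) / real (k+1))
       = (\<Sum>j<Suc m. (1-p)^j) / real (Suc m)" (is "?lhs = ?rhs")
proof (cases "p = 0")
  case True
  have "(\<Sum>k<Suc m. real (m choose k) * p^k * (1-p)^(m-k) / real (k+1)) = 1"
    unfolding True by (subst sum.lessThan_Suc_shift) simp
  then show ?thesis using True by simp
next
  case False
  have bin: "1 = (1-p)^Suc m + (\<Sum>k<Suc m. real (Suc m choose Suc k) * p^Suc k * (1-p)^(m-k))"
  proof -
    have "(1::real) = (p + (1-p))^Suc m" by simp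
    also have "\<dots> = (\<Sum>k\<le>Suc m. real (Suc m choose k) * p^k * (1-p)^(Suc m - k))"
      by (subst binomial_ring) simp
    also have "\<dots> = (1-p)^Suc m + (\<Sum>k<Suc m. real (Suc m choose Suc k) * p^Suc k * (1-p)^(m-k))"
      by (subst sum.atMost_Suc_shift) (simp add: lessThan_Suc_atMost)
    finally show ?thesis .
  qed
  have "p * (\<Sum>k<Suc m. real (m choose k) * p^k * (1-p)^(m-k) / real (k+1))
      = (\<Sum>k<Suc m. real (Suc m choose Suc k) * p^Suc k * (1-p)^(m-k)) / real (Suc m)"
    unfolding sum_distrib_left sum_divide_distrib
  proof (rule sum.cong[OF refl])
    fix k assume "k \<in> {..<Suc m}"
    have e: "real (Suc k) * real (Suc m choose Suc k) = real (Suc m) * real (m choose k)"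
      using Suc_times_binomial[of k m] by (metis of_nat_mult)
    have "real (Suc m choose Suc k) = real (Suc m) * real (m choose k) / real (Suc k)"
      using e by (simp add: field_simps)
    then show "p * (real (m choose k) * p ^ k * (1 - p) ^ (m - k) / real (k + 1)) =
         real (Suc m choose Suc k) * p ^ Suc k * (1 - p) ^ (m - k) / real (Suc m)"
      by (subst \<open>real (Suc m choose Suc k) = _\<close>) (simp add: field_simps del: binomial_Suc_Suc of_nat_Suc)
  qed
  also have "\<dots> = (1 - (1-p)^Suc m) / real (Suc m)" using bin by simp
  also have "\<dots> = p * ((\<Sum>j<Suc m. (1-p)^j) / real (Suc m))" using geo[of p "Suc m"] by simp
  finally have "p * ?lhs = p * ?rhs" by (simp only: mult.assoc)
  then show ?thesis using False mult_left_cancel by blast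
qed

lemma Phi_eq:
  assumes "n \<ge> 1"
  shows "Phi F n c q = q * (\<Sum>j<n. (1 - q * F c)^j) / real n"
proof -
  obtain m where n: "n = Suc m" using assms by (cases n) auto
  show ?thesis unfolding Phi_def n using S_eq[of m "q * F c"] by simp
qed

lemma F_le1:
  fixes F :: "real \<Rightarrow> real"
  assumes "mono F" "(F \<longlongrightarrow> 1) at_top"
  shows "F x \<le> 1"
proof (rule tendsto_lowerbound[OF assms(2)])
  show "\<forall>\<^sub>F i in at_top. F x \<le> F i"
    unfolding eventually_at_top_linorder by (rule exI[of _ x]) (auto intro: monoD[OF assms(1)])
qed simp

lemma F_ge0:
  fixes F :: "real \<Rightarrow> real"
  assumes "mono F" "(F \<longlongrightarrow> 0) at_bot"
  shows "0 \<le> F x"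
proof (rule tendsto_upperbound[OF assms(2)])
  show "\<forall>\<^sub>F i in at_bot. F i \<le> F x"
    unfolding eventually_at_bot_linorder by (rule exI[of _ x]) (auto intro: monoD[OF assms(1)])
qed simp

lemma P_pos:
  assumes "n \<ge> 1" "0 \<le> x" "x \<le> (1::real)"
  shows "0 < (\<Sum>j<n. (1 - x)^j) / real n" "(\<Sum>j<n. (1 - x)^j) / real n \<le> 1"
proof -
  obtain m where n: "n = Suc m" using assms by (cases n) auto
  have "(\<Sum>j<n. (1 - x)^j) = 1 + (\<Sum>j<m. (1 - x)^(Suc j))"
    unfolding n by (subst sum.lessThan_Suc_shift) simp
  moreover have "0 \<le> (\<Sum>j<m. (1 - x)^(Suc j))"
    using assms by (intro sum_nonneg) simp
  ultimately show "0 < (\<Sum>j<n. (1 - x)^j) / real n" using assms by simp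
  have "(\<Sum>j<n. (1 - x)^j) \<le> (\<Sum>j<n. 1)"
    using assms by (intro sum_mono power_le_one) auto
  then show "(\<Sum>j<n. (1 - x)^j) / real n \<le> 1" using assms by simp
qed

lemma P_nonneg:
  assumes "n \<ge> 1" "0 \<le> x" "x \<le> (1::real)" "0 \<le> q" "q \<le> 1"
  shows "0 \<le> q * (\<Sum>j<n. (1 - q * x)^j) / real n"
proof -
  have "q * x \<le> 1" using assms by (metis mult_le_one)
  then show ?thesis using assms by (intro divide_nonneg_nonneg mult_nonneg_nonneg sum_nonneg) auto
qed

lemma P_le:
  assumes "n \<ge> 1" "0 \<le> x" "x \<le> (1::real)" "0 \<le> q" "q \<le> 1"
  shows "q * (\<Sum>j<n. (1 - q * x)^j) / real n \<le> (\<Sum>j<n. (1 - x)^j) / real n"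
proof (cases "x = 0")
  case True
  then show ?thesis using assms by (simp add: divide_right_mono)
next
  case False
  then have xp: "0 < x" using assms by simp
  have "x * (q * (\<Sum>j<n. (1 - q * x)^j) / real n) = (1 - (1 - q*x)^n) / real n"
    using geo[of "q*x" n] by (simp add: algebra_simps)
  also have "\<dots> \<le> (1 - (1 - x)^n) / real n"
  proof -
    have "q * x \<le> x" using assms xp by (simp add: mult_le_cancel_right1)
    then have "(1 - x)^n \<le> (1 - q*x)^n" using assms by (intro power_mono) auto
    then show ?thesis by (intro divide_right_mono) auto
  qed
  also have "\<dots> = x * ((\<Sum>j<n. (1 - x)^j) / real n)"
    using geo[of x n] by (simp add: algebra_simps)
  finally show ?thesis using xp by (simp only: mult_le_cancel_left_pos)
qed

lemma P_anti:
  assumes "0 \<le> x" "x \<le> y" "y \<le> (1::real)"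
  shows "(\<Sum>j<n. (1 - y)^j) / real n \<le> (\<Sum>j<n. (1 - x)^j) / real n"
  using assms by (intro divide_right_mono sum_mono power_mono) auto

theorem lemma4:
  fixes cl ch :: ereal and F f :: "real \<Rightarrow> real" and n L :: nat
    and mu q :: "nat \<Rightarrow> real"
  assumes "cost_dist cl ch F f"
    and "n \<ge> 1"
    and "\<forall>l<L. 0 < mu l \<and> mu l \<le> 1"
    and "\<forall>l<L. 0 < q l \<and> q l \<le> 1"
  shows "(\<forall>vbar>0. \<exists>!c. c = vbar * Phi F n c 1)
       \<and> strict_mono_on {0<..} (c_a F n)
       \<and> (\<forall>vbar>0. Cset F n L mu q vbar = {0 .. c_a F n vbar})"
proof -
  have contF: "continuous_on UNIV F" and monoF: "mono F"
    and l0: "(F \<longlongrightarrow> 0) at_bot" and l1: "(F \<longlongrightarrow> 1) at_top"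
    using assms(1) unfolding cost_dist_def by auto
  have F0: "0 \<le> F x" for x using F_ge0[OF monoF l0] .
  have F1: "F x \<le> 1" for x using F_le1[OF monoF l1] .
  define g where "g c = Phi F n c 1" for c
  have g_eq: "g c = (\<Sum>j<n. (1 - F c)^j) / real n" for c
    unfolding g_def Phi_eq[OF assms(2)] by simp
  have gpos: "0 < g c" for c unfolding g_eq using P_pos[OF assms(2) F0 F1] by blast
  have gle1: "g c \<le> 1" for c unfolding g_eq using P_pos[OF assms(2) F0 F1] by blast
  have ganti: "c \<le> d \<Longrightarrow> g d \<le> g c" for c d
    unfolding g_eq using F0 F1 monoF by (intro P_anti) (auto dest: monoD)
  have gcont: "continuous_on UNIV g"
    unfolding g_eq by (intro continuous_intros contF) (use assms(2) in auto)
  have Phi_le: "0 \<le> Phi F n c qq \<and> Phi F n c qq \<le> g c" if "0 \<le> qq" "qq \<le> 1" for c qq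
    unfolding g_eq Phi_eq[OF assms(2)]
    using P_nonneg[OF assms(2) F0 F1 that] P_le[OF assms(2) F0 F1 that] by blast
  have Gmono: "c - vbar * g c < d - vbar * g d" if "c < d" "0 < vbar" for c d vbar
  proof -
    have "vbar * g d \<le> vbar * g c" using ganti[of c d] that by (intro mult_left_mono) auto
    then show ?thesis using that by linarith
  qed
  have ex1: "\<exists>!c. c = vbar * g c" if vp: "0 < vbar" for vbar
  proof -
    have "\<exists>c. 0 \<le> c \<and> c \<le> vbar \<and> c - vbar * g c = 0"
    proof (rule IVT'[of "\<lambda>c. c - vbar * g c" 0 0 vbar])
      show "0 - vbar * g 0 \<le> 0" using gpos[of 0] vp by simp
      show "0 \<le> vbar - vbar * g vbar" using gle1[of vbar] vp by (simp add: mult_le_cancel_left1)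
      show "0 \<le> vbar" using vp by simp
      show "continuous_on {0..vbar} (\<lambda>c. c - vbar * g c)"
        by (intro continuous_intros continuous_on_subset[OF gcont]) auto
    qed
    then obtain c where c: "c = vbar * g c" by auto
    show ?thesis
    proof (rule ex1I[of _ c])
      show "c = vbar * g c" by fact
      fix d assume d: "d = vbar * g d"
      show "d = c"
      proof (rule ccontr)
        assume "d \<noteq> c"
        then have "d < c \<or> c < d" by auto
        then show False using Gmono[OF _ vp, of d c] Gmono[OF _ vp, of c d] c d by auto
      qed
    qed
  qed
  have cafix: "c_a F n vbar = vbar * g (c_a F n vbar)" if "0 < vbar" for vbar
    unfolding c_a_def g_def[symmetric] using theI'[OF ex1[OF that]] .
  have key: "c \<le> c_a F n vbar \<longleftrightarrow> c \<le> vbar * g c" if vp: "0 < vbar" for c vbar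
  proof
    assume "c \<le> c_a F n vbar"
    then have "c = c_a F n vbar \<or> c < c_a F n vbar" by auto
    then show "c \<le> vbar * g c"
      using Gmono[OF _ vp, of c "c_a F n vbar"] cafix[OF vp] by auto
  next
    assume h: "c \<le> vbar * g c"
    show "c \<le> c_a F n vbar"
    proof (rule ccontr)
      assume "\<not> c \<le> c_a F n vbar"
      then show False using Gmono[OF _ vp, of "c_a F n vbar" c] cafix[OF vp] h by auto
    qed
  qed
  have part1: "\<forall>vbar>0. \<exists>!c. c = vbar * Phi F n c 1" using ex1 unfolding g_def by blast
  have part2: "strict_mono_on {0<..} (c_a F n)"
  proof (rule strict_mono_onI)
    fix v1 v2 :: real assume "v1 \<in> {0<..}" "v2 \<in> {0<..}" "v1 < v2"
    then have p: "0 < v1" "0 < v2" "v1 < v2" by auto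
    show "c_a F n v1 < c_a F n v2"
    proof (rule ccontr)
      assume "\<not> c_a F n v1 < c_a F n v2"
      then have le: "c_a F n v2 \<le> c_a F n v1" by simp
      have "c_a F n v1 = v1 * g (c_a F n v1)" using cafix[OF p(1)] .
      also have "\<dots> \<le> v1 * g (c_a F n v2)" using ganti[OF le] p by (intro mult_left_mono) auto
      also have "\<dots> < v2 * g (c_a F n v2)" using gpos p by (intro mult_strict_right_mono) auto
      also have "\<dots> = c_a F n v2" using cafix[OF p(2)] by simp
      finally show False using le by simp
    qed
  qed
  have part3: "Cset F n L mu q vbar = {0 .. c_a F n vbar}" if vp: "0 < vbar" for vbar
  proof
    show "Cset F n L mu q vbar \<subseteq> {0 .. c_a F n vbar}"
    proof
      fix c assume "c \<in> Cset F n L mu q vbar"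
      then obtain v va qa where c: "c = Psi F n L mu q c v va qa"
        and bud: "(\<Sum>l<L. v l) + va \<le> vbar" and vn: "\<forall>l<L. 0 \<le> v l" and va: "0 \<le> va"
        and qa: "0 \<le> qa" "qa \<le> 1"
        unfolding Cset_def by blast
      have t0: "0 \<le> v l * mu l * Phi F n c (q l)" and t1: "v l * mu l * Phi F n c (q l) \<le> v l * g c"
        if "l < L" for l
      proof -
        have h: "0 \<le> Phi F n c (q l)" "Phi F n c (q l) \<le> g c" "0 < mu l" "mu l \<le> 1" "0 \<le> v l"
          using Phi_le[of "q l" c] assms(3,4) vn that by auto
        show "0 \<le> v l * mu l * Phi F n c (q l)" using h by simp
        have "mu l * Phi F n c (q l) \<le> 1 * g c" using h by (intro mult_mono) auto
        then show "v l * mu l * Phi F n c (q l) \<le> v l * g c"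
          using h mult_left_mono by (metis mult.assoc mult_1)
      qed
      have pa: "0 \<le> Phi F n c qa" "Phi F n c qa \<le> g c" using Phi_le[OF qa] by auto
      have "0 \<le> Psi F n L mu q c v va qa"
        unfolding Psi_def using t0 pa va by (intro add_nonneg_nonneg sum_nonneg) auto
      moreover have "Psi F n L mu q c v va qa \<le> (\<Sum>l<L. v l * g c) + va * g c"
        unfolding Psi_def using t1 pa va by (intro add_mono sum_mono mult_left_mono) auto
      moreover have "(\<Sum>l<L. v l * g c) + va * g c = ((\<Sum>l<L. v l) + va) * g c"
        by (simp add: sum_distrib_right distrib_right)
      moreover have "((\<Sum>l<L. v l) + va) * g c \<le> vbar * g c"
        using bud gpos[of c] by (intro mult_right_mono) (auto simp: less_imp_le)
      ultimately show "c \<in> {0 .. c_a F n vbar}" using c key[OF vp, of c] by auto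
    qed
  next
    show "{0 .. c_a F n vbar} \<subseteq> Cset F n L mu q vbar"
    proof
      fix c assume "c \<in> {0 .. c_a F n vbar}"
      then have c0: "0 \<le> c" and cle: "c \<le> vbar * g c" using key[OF vp] by auto
      define va where "va = c / g c"
      have gp: "0 < g c" by (rule gpos)
      have "Psi F n L mu q c (\<lambda>_. 0) va 1 = c"
        unfolding Psi_def va_def g_def[symmetric] using gp by simp
      moreover have "va \<le> vbar" unfolding va_def using cle gp by (simp add: divide_le_eq)
      moreover have "0 \<le> va" unfolding va_def using c0 gp by simp
      ultimately show "c \<in> Cset F n L mu q vbar"
        unfolding Cset_def by (intro CollectI exI[of _ "\<lambda>_. 0"] exI[of _ va] exI[of _ 1]) auto
    qed
  qed
  show ?thesis using part1 part2 part3 by blast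
qed

end
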